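(* There is a universal constant $C>0$ such that the following holds. Let $\theta>0$, let $0<m<M<\infty$ and let $F$ be a finite measure on $[m,M]$. For every $0<\epsilon<\tfrac12$ there exists a discrete measure $F_\epsilon$ with $|F_\epsilon|=|F|$ and with fewer than $C\frac{M}{m}\log\frac{1}{\epsilon}$ support points such that \[ \|p_{\theta,F}-p_{\theta,F_\epsilon}\|_1<|F|\,\epsilon. \]
   Context: For $\theta>0$ and a finite measure $F$ on $(0,\infty)$, $p_{\theta,F}(x,y)=\int z^2\theta e^{-z(x+\theta y)}\,dF(z)$ for $(x,y)\in(0,\infty)^2$. $|F|$ denotes the total mass of $F$, and $\|\cdot\|_1$ is the $L^1$ norm with respect to Lebesgue measure on $(0,\infty)^2$. *)

theory Defs
  imports "HOL-Analysis.Analysis"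
begin

text \<open>Finite measures F on (0,infinity) are represented as finite Borel measures on the reals
  that give no mass outside (0,infinity).\<close>
definition p_mix :: "real \<Rightarrow> real measure \<Rightarrow> real \<Rightarrow> real \<Rightarrow> real" where
  "p_mix \<theta> F x y = (\<integral>z. z\<^sup>2 * \<theta> * exp (- z * (x + \<theta> * y)) \<partial>F)"

definition L1_dist :: "(real \<Rightarrow> real \<Rightarrow> real) \<Rightarrow> (real \<Rightarrow> real \<Rightarrow> real) \<Rightarrow> ennreal" where
  "L1_dist f g = (\<integral>\<^sup>+ xy. indicator ({0<..} \<times> {0<..}) xy *
      ennreal \<bar>f (fst xy) (snd xy) - g (fst xy) (snd xy)\<bar> \<partial>(lborel :: (real \<times> real) measure))"

definition fin_borel_measure :: "real measure \<Rightarrow> bool" where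
  "fin_borel_measure F \<longleftrightarrow> sets F = sets borel \<and> finite_measure F"

end

theory Submission
  imports Defs "HOL-Probability.Distributions" "HOL-Analysis.Harmonic_Numbers"
begin

lemma nn_int_pow_exp:
  assumes a: "0 < a"
  shows "(\<integral>\<^sup>+x. ennreal (x^k * exp (-(a*x))) * indicator {0..} x \<partial>lborel) = ennreal (fact k / a^(k+1))"
proof -
  have eq: "\<And>x. indicator {0..} (a*x) = (indicator {0..} x :: ennreal)"
    using a by (simp add: zero_le_mult_iff split: split_indicator)
  have "(\<integral>\<^sup>+x. ennreal (x^k * exp (-x)) * indicator {0..} x \<partial>lborel)
     = ennreal a * (\<integral>\<^sup>+x. ennreal ((0 + a*x)^k * exp (-(0 + a*x))) * indicator {0..} (0 + a*x) \<partial>lborel)"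
    by (subst nn_integral_real_affine[where c=a and t=0]) (use a in auto)
  also have "\<dots> = ennreal a * (\<integral>\<^sup>+x. ennreal (a^k) * (ennreal (x^k * exp (-(a*x))) * indicator {0..} x) \<partial>lborel)"
  proof -
    have "\<And>x. ennreal ((0 + a*x)^k * exp (-(0 + a*x))) * indicator {0..} (0 + a*x) = ennreal (a^k) * (ennreal (x^k * exp (-(a*x))) * indicator {0..} x)"
      using a by (simp add: eq power_mult_distrib ennreal_mult[symmetric] mult.assoc split: split_indicator)
    then show ?thesis by simp
  qed
  also have "\<dots> = ennreal (a * a^k) * (\<integral>\<^sup>+x. ennreal (x^k * exp (-(a*x))) * indicator {0..} x \<partial>lborel)"
    using a by (subst nn_integral_cmult) (auto simp: ennreal_mult mult.assoc)
  finally have "ennreal (a^(k+1)) * (\<integral>\<^sup>+x. ennreal (x^k * exp (-(a*x))) * indicator {0..} x \<partial>lborel) = ennreal (fact k)"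
    by (simp add: nn_intergal_power_times_exp_Ici)
  then have "(\<integral>\<^sup>+x. ennreal (x^k * exp (-(a*x))) * indicator {0..} x \<partial>lborel) = ennreal (fact k) / ennreal (a^(k+1))"
    using a by (metis ennreal_eq_0_iff ennreal_neq_top ennreal_mult_divide_eq mult.commute not_le zero_less_power)
  also have "\<dots> = ennreal (fact k / a^(k+1))"
    using a by (simp add: divide_ennreal)
  finally show ?thesis .
qed

lemma L1_reduce:
  fixes \<phi> :: "real \<Rightarrow> ennreal"
  assumes [measurable]: "\<phi> \<in> borel_measurable borel" and th: "\<theta> > 0"
  shows "(\<integral>\<^sup>+xy. indicator ({0<..}\<times>{0<..}) xy * (ennreal \<theta> * \<phi> (fst xy + \<theta> * snd xy)) \<partial>(lborel::(real\<times>real) measure))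
       = (\<integral>\<^sup>+u. indicator {0<..} u * (ennreal u * \<phi> u) \<partial>lborel)"
proof -
  have "(\<integral>\<^sup>+xy. indicator ({0<..}\<times>{0<..}) xy * (ennreal \<theta> * \<phi> (fst xy + \<theta> * snd xy)) \<partial>(lborel::(real\<times>real) measure))
     = (\<integral>\<^sup>+x. \<integral>\<^sup>+y. indicator ({0<..}\<times>{0<..}) (x,y) * (ennreal \<theta> * \<phi> (x + \<theta> * y)) \<partial>lborel \<partial>lborel)"
  proof -
    have "(\<integral>\<^sup>+x. \<integral>\<^sup>+y. (\<lambda>xy. indicator ({0<..}\<times>{0<..}) xy * (ennreal \<theta> * \<phi> (fst xy + \<theta> * snd xy))) (x,y) \<partial>lborel \<partial>lborel)
      = integral\<^sup>N (lborel \<Otimes>\<^sub>M lborel) (\<lambda>xy. indicator ({0<..}\<times>{0<..}) xy * (ennreal \<theta> * \<phi> (fst xy + \<theta> * snd xy)))"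
    proof (rule sigma_finite_measure.nn_integral_fst[OF sigma_finite_lborel])
      have "({0<..}\<times>{0<..} :: (real\<times>real) set) \<in> sets borel"
        by (intro borel_open open_Times) auto
      moreover have "(\<lambda>xy::real\<times>real. fst xy + \<theta> * snd xy) \<in> borel_measurable borel"
        by (intro borel_measurable_continuous_onI continuous_intros)
      ultimately show "(\<lambda>xy. indicator ({0<..}\<times>{0<..}) xy * (ennreal \<theta> * \<phi> (fst xy + \<theta> * snd xy))) \<in> borel_measurable (lborel \<Otimes>\<^sub>M lborel)"
        unfolding lborel_prod by measurable
    qed
    then show ?thesis by (simp add: lborel_prod)
  qed
  also have "\<dots> = (\<integral>\<^sup>+x. indicator {0<..} x * (\<integral>\<^sup>+u. indicator {x<..} u * \<phi> u \<partial>lborel) \<partial>lborel)"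
  proof (intro nn_integral_cong)
    fix x :: real
    show "(\<integral>\<^sup>+y. indicator ({0<..}\<times>{0<..}) (x,y) * (ennreal \<theta> * \<phi> (x + \<theta> * y)) \<partial>lborel)
        = indicator {0<..} x * (\<integral>\<^sup>+u. indicator {x<..} u * \<phi> u \<partial>lborel)"
    proof (cases "x > 0")
      case True
      have "(\<integral>\<^sup>+u. indicator {x<..} u * \<phi> u \<partial>lborel)
          = ennreal \<theta> * (\<integral>\<^sup>+y. indicator {x<..} (x + \<theta> * y) * \<phi> (x + \<theta> * y) \<partial>lborel)"
        using th by (subst nn_integral_real_affine[where c=\<theta> and t=x]) auto
      also have "\<dots> = (\<integral>\<^sup>+y. indicator ({0<..}\<times>{0<..}) (x,y) * (ennreal \<theta> * \<phi> (x + \<theta> * y)) \<partial>lborel)"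
        using th True by (subst nn_integral_cmult[symmetric]) (auto intro!: nn_integral_cong simp: zero_less_mult_iff split: split_indicator)
      finally show ?thesis using True by simp
    qed (auto)
  qed
  also have "\<dots> = (\<integral>\<^sup>+x. \<integral>\<^sup>+u. indicator {(x,u). 0 < x \<and> x < u} (x,u) * \<phi> u \<partial>lborel \<partial>lborel)"
    by (subst nn_integral_cmult[symmetric]) (auto intro!: nn_integral_cong split: split_indicator)
  also have "\<dots> = (\<integral>\<^sup>+u. \<integral>\<^sup>+x. indicator {(x,u). 0 < x \<and> x < u} (x,u) * \<phi> u \<partial>lborel \<partial>lborel)"
  proof -
    have "{(x::real, u::real). 0 < x \<and> x < u} \<in> sets (lborel \<Otimes>\<^sub>M lborel)"
    proof -
      have "{p::real\<times>real. 0 < fst p \<and> fst p < snd p} \<in> sets borel"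
        by (intro borel_open open_Collect_conj open_Collect_less continuous_intros)
      then show ?thesis unfolding case_prod_unfold by (metis borel_prod sets_pair_measure_cong sets_lborel)
    qed
    then have meas: "(\<lambda>(x, u). indicator {(x, u). 0 < x \<and> x < u} (x, u) * \<phi> u) \<in> borel_measurable (lborel \<Otimes>\<^sub>M lborel)"
      by (auto simp: case_prod_unfold)
    show ?thesis
      using lborel_pair.Fubini'[OF meas] by simp
  qed
  also have "\<dots> = (\<integral>\<^sup>+u. indicator {0<..} u * (ennreal u * \<phi> u) \<partial>lborel)"
  proof (intro nn_integral_cong)
    fix u :: real
    have "(\<integral>\<^sup>+x. indicator {(x,u). 0 < x \<and> x < u} (x,u) * \<phi> u \<partial>lborel) = (\<integral>\<^sup>+x. indicator {0<..<u} x * \<phi> u \<partial>lborel)"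
      by (auto intro!: nn_integral_cong split: split_indicator)
    also have "\<dots> = \<phi> u * emeasure lborel {0<..<u}"
      by (subst nn_integral_cmult_indicator[symmetric]) (auto simp: mult.commute)
    also have "\<dots> = indicator {0<..} u * (ennreal u * \<phi> u)"
      by (auto simp: mult.commute split: split_indicator)
    finally show "(\<integral>\<^sup>+x. indicator {(x,u). 0 < x \<and> x < u} (x,u) * \<phi> u \<partial>lborel) = indicator {0<..} u * (ennreal u * \<phi> u)" .
  qed
  finally show ?thesis .
qed

lemma lin_dep:
  fixes v :: "'a \<Rightarrow> nat \<Rightarrow> real"
  shows "finite I \<Longrightarrow> card I > n \<Longrightarrow> \<exists>c. (\<exists>i\<in>I. c i \<noteq> 0) \<and> (\<forall>j<n. (\<Sum>i\<in>I. c i * v i j) = 0)"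
proof (induction n arbitrary: I v)
  case 0
  then have "I \<noteq> {}" by auto
  then show ?case by (intro exI[of _ "\<lambda>_. 1"]) auto
next
  case (Suc n)
  show ?case
  proof (cases "\<forall>i\<in>I. v i n = 0")
    case True
    from Suc.IH[of I v] Suc.prems obtain c where c: "\<exists>i\<in>I. c i \<noteq> 0" "\<forall>j<n. (\<Sum>i\<in>I. c i * v i j) = 0"
      by auto
    have "\<forall>j<Suc n. (\<Sum>i\<in>I. c i * v i j) = 0"
    proof (intro allI impI)
      fix j assume "j < Suc n"
      then consider "j < n" | "j = n" by linarith
      then show "(\<Sum>i\<in>I. c i * v i j) = 0"
        by cases (use c True in auto)
    qed
    then show ?thesis using c by blast
  next
    case False
    then obtain i0 where i0: "i0 \<in> I" "v i0 n \<noteq> 0" by auto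
    define I' where "I' = I - {i0}"
    have fin: "finite I'" using Suc.prems by (auto simp: I'_def)
    have cI': "card I' > n" using Suc.prems i0 by (auto simp: I'_def)
    define v' where "v' i j = v i j - v i n / v i0 n * v i0 j" for i j
    from Suc.IH[OF fin cI', of v'] obtain c' where c': "\<exists>i\<in>I'. c' i \<noteq> 0" "\<forall>j<n. (\<Sum>i\<in>I'. c' i * v' i j) = 0"
      by auto
    define c where "c = c'(i0 := - (\<Sum>i\<in>I'. c' i * v i n) / v i0 n)"
    have nz: "\<exists>i\<in>I. c i \<noteq> 0" using c' by (auto simp: c_def I'_def)
    have split: "(\<Sum>i\<in>I. c i * v i j) = c i0 * v i0 j + (\<Sum>i\<in>I'. c' i * v i j)" for j
    proof -
      have "(\<Sum>i\<in>I. c i * v i j) = c i0 * v i0 j + (\<Sum>i\<in>I'. c i * v i j)"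
        using Suc.prems i0 unfolding I'_def by (simp add: sum.remove)
      moreover have "(\<Sum>i\<in>I'. c i * v i j) = (\<Sum>i\<in>I'. c' i * v i j)"
        by (intro sum.cong) (auto simp: c_def I'_def)
      ultimately show ?thesis by simp
    qed
    have "\<forall>j<Suc n. (\<Sum>i\<in>I. c i * v i j) = 0"
    proof (intro allI impI)
      fix j assume "j < Suc n"
      then consider "j < n" | "j = n" by linarith
      then show "(\<Sum>i\<in>I. c i * v i j) = 0"
      proof cases
        case 1
        have "0 = (\<Sum>i\<in>I'. c' i * v' i j)" using c' 1 by auto
        also have "\<dots> = (\<Sum>i\<in>I'. c' i * v i j - (c' i * v i n) * (v i0 j / v i0 n))"
          by (intro sum.cong) (auto simp: v'_def algebra_simps)
        also have "\<dots> = (\<Sum>i\<in>I'. c' i * v i j) - (\<Sum>i\<in>I'. c' i * v i n) * (v i0 j / v i0 n)"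
          by (simp only: sum_subtractf sum_distrib_right)
        finally have e: "(\<Sum>i\<in>I'. c' i * v i j) = (\<Sum>i\<in>I'. c' i * v i n) * (v i0 j / v i0 n)" by simp
        show ?thesis unfolding split using i0 e by (simp add: c_def field_simps)
      next
        case 2
        show ?thesis unfolding split 2 using i0 by (simp add: c_def field_simps)
      qed
    qed
    then show ?thesis using nz by blast
  qed
qed

lemma reduce:
  fixes f :: "nat \<Rightarrow> 'a \<Rightarrow> real" and w :: "'a \<Rightarrow> real"
  assumes "finite S0" "\<forall>z\<in>S0. w z \<ge> 0"
  shows "\<exists>S w'. S \<subseteq> S0 \<and> card S \<le> n+1 \<and> (\<forall>z\<in>S. w' z > 0) \<and> (\<Sum>z\<in>S. w' z) = (\<Sum>z\<in>S0. w z)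
     \<and> (\<forall>j<n. (\<Sum>z\<in>S. w' z * f j z) = (\<Sum>z\<in>S0. w z * f j z))"
  using assms
proof (induction "card S0" arbitrary: S0 w rule: less_induct)
  case less
  show ?case
  proof (cases "card S0 \<le> n+1")
    case True
    define S where "S = {z\<in>S0. w z > 0}"
    have sub: "S \<subseteq> S0" by (auto simp: S_def)
    have cS: "card S \<le> n+1" using True card_mono[OF less.prems(1) sub] by linarith
    have e1: "(\<Sum>z\<in>S. w z) = (\<Sum>z\<in>S0. w z)"
      using less.prems by (intro sum.mono_neutral_left) (auto simp: S_def)
    have e2: "(\<Sum>z\<in>S. w z * f j z) = (\<Sum>z\<in>S0. w z * f j z)" for j
      using less.prems by (intro sum.mono_neutral_left) (auto simp: S_def)
    show ?thesis
      by (intro exI[of _ S] exI[of _ w]) (use sub cS e1 e2 in \<open>auto simp: S_def\<close>)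
  next
    case False
    define v where "v z j = (if j = 0 then 1 else f (j - 1) z)" for z j
    from lin_dep[OF less.prems(1), of "n+1" v] False
    obtain c where c: "\<exists>i\<in>S0. c i \<noteq> 0" "\<forall>j<n+1. (\<Sum>i\<in>S0. c i * v i j) = 0"
      by auto
    have c0: "(\<Sum>i\<in>S0. c i) = 0" using c(2)[rule_format, of 0] by (simp add: v_def)
    have cf: "(\<Sum>i\<in>S0. c i * f j i) = 0" if "j < n" for j
      using c(2)[rule_format, of "Suc j"] that by (simp add: v_def)
    have "\<exists>z\<in>S0. c z > 0"
    proof (rule ccontr)
      assume "\<not> ?thesis"
      then have h1: "\<forall>z\<in>S0. 0 \<le> - c z" by auto
      have h2: "(\<Sum>z\<in>S0. - c z) = 0" using c0 by (simp add: sum_negf)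
      have "\<forall>z\<in>S0. - c z = 0"
        using sum_nonneg_eq_0_iff[OF less.prems(1), of "\<lambda>z. - c z"] h1 h2 by simp
      then show False using c(1) by auto
    qed
    define P where "P = {z\<in>S0. c z > 0}"
    have Pfin: "finite P" "P \<noteq> {}" using less.prems \<open>\<exists>z\<in>S0. c z > 0\<close> by (auto simp: P_def)
    define t where "t = Min ((\<lambda>z. w z / c z) ` P)"
    obtain zs where zs: "zs \<in> P" "t = w zs / c zs"
    proof -
      have "t \<in> (\<lambda>z. w z / c z) ` P" unfolding t_def using Pfin by (intro Min_in) auto
      then show ?thesis using that by blast
    qed
    have tle: "t \<le> w z / c z" if "z \<in> P" for z
      unfolding t_def using Pfin that by (intro Min_le) auto
    have t0: "t \<ge> 0" using zs less.prems by (auto simp: P_def)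
    define w1 where "w1 z = w z - t * c z" for z
    have w1nn: "\<forall>z\<in>S0 - {zs}. w1 z \<ge> 0"
    proof
      fix z assume z: "z \<in> S0 - {zs}"
      show "w1 z \<ge> 0"
      proof (cases "c z > 0")
        case True
        then have "t \<le> w z / c z" using tle z by (auto simp: P_def)
        then have "t * c z \<le> w z" using True by (simp add: pos_le_divide_eq)
        then show ?thesis by (simp add: w1_def)
      next
        case False
        then have "t * c z \<le> 0" using t0 by (simp add: mult_nonneg_nonpos)
        then show ?thesis using less.prems z by (auto simp: w1_def)
      qed
    qed
    have w1zs: "w1 zs = 0" using zs by (auto simp: w1_def P_def)
    have zsS0: "zs \<in> S0" using zs by (auto simp: P_def)
    have card_lt: "card (S0 - {zs}) < card S0"
      using less.prems(1) zsS0 by (meson card_Diff1_less)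
    from less.hyps[OF card_lt _ w1nn] less.prems(1)
    obtain S w' where S: "S \<subseteq> S0 - {zs}" "card S \<le> n+1" "\<forall>z\<in>S. w' z > 0"
      "(\<Sum>z\<in>S. w' z) = (\<Sum>z\<in>S0 - {zs}. w1 z)"
      "\<forall>j<n. (\<Sum>z\<in>S. w' z * f j z) = (\<Sum>z\<in>S0 - {zs}. w1 z * f j z)"
      by auto
    have s1: "(\<Sum>z\<in>S0 - {zs}. w1 z) = (\<Sum>z\<in>S0. w z)"
    proof -
      have "(\<Sum>z\<in>S0 - {zs}. w1 z) = (\<Sum>z\<in>S0. w1 z)"
        using less.prems(1) zsS0 w1zs by (simp add: sum.remove)
      also have "\<dots> = (\<Sum>z\<in>S0. w z) - t * (\<Sum>z\<in>S0. c z)"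
        by (simp add: w1_def sum_subtractf sum_distrib_left)
      finally show ?thesis using c0 by simp
    qed
    have s2: "(\<Sum>z\<in>S0 - {zs}. w1 z * f j z) = (\<Sum>z\<in>S0. w z * f j z)" if "j < n" for j
    proof -
      have "(\<Sum>z\<in>S0 - {zs}. w1 z * f j z) = (\<Sum>z\<in>S0. w1 z * f j z)"
        using less.prems(1) zsS0 w1zs by (simp add: sum.remove)
      also have "\<dots> = (\<Sum>z\<in>S0. w z * f j z) - t * (\<Sum>z\<in>S0. c z * f j z)"
        by (simp add: w1_def sum_subtractf sum_distrib_left algebra_simps)
      finally show ?thesis using cf[OF that] by simp
    qed
    show ?thesis
      by (intro exI[of _ S] exI[of _ w']) (use S s1 s2 in auto)
  qed
qed

definition disc_measure :: "real set \<Rightarrow> (real \<Rightarrow> real) \<Rightarrow> real measure" where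
  "disc_measure S w = distr (point_measure S (\<lambda>z. ennreal (w z))) borel (\<lambda>z. z)"

lemma disc_measure_props:
  assumes fin: "finite S" and pos: "\<forall>z\<in>S. w z > 0"
  shows "fin_borel_measure (disc_measure S w)"
    and "emeasure (disc_measure S w) (- S) = 0"
    and "\<forall>z\<in>S. emeasure (disc_measure S w) {z} > 0"
    and "measure (disc_measure S w) UNIV = (\<Sum>z\<in>S. w z)"
    and "\<And>g. g \<in> borel_measurable borel \<Longrightarrow> (\<integral>z. g z \<partial>disc_measure S w) = (\<Sum>z\<in>S. w z * g z)"
proof -
  let ?P = "point_measure S (\<lambda>z. ennreal (w z))"
  have meas: "(\<lambda>z. z) \<in> measurable ?P borel" by simp
  have em: "emeasure (disc_measure S w) A = ennreal (\<Sum>z\<in>S \<inter> A. w z)" if "A \<in> sets borel" for A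
  proof -
    have "emeasure (disc_measure S w) A = emeasure ?P (A \<inter> S)"
      unfolding disc_measure_def using that by (subst emeasure_distr) (auto simp: space_point_measure Int_commute vimage_def)
    also have "\<dots> = (\<Sum>z\<in>A \<inter> S. ennreal (w z))"
      using fin by (subst emeasure_point_measure_finite) auto
    also have "\<dots> = ennreal (\<Sum>z\<in>S \<inter> A. w z)"
      using pos by (subst sum_ennreal) (auto simp: Int_commute less_imp_le)
    finally show ?thesis .
  qed
  have sets: "sets (disc_measure S w) = sets borel" by (simp add: disc_measure_def)
  have univ: "emeasure (disc_measure S w) UNIV = ennreal (\<Sum>z\<in>S. w z)" using em[of UNIV] by simp
  show "fin_borel_measure (disc_measure S w)"
    unfolding fin_borel_measure_def
    using sets univ by (auto intro!: finite_measureI simp: disc_measure_def)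
  show "emeasure (disc_measure S w) (- S) = 0"
    using em[of "- S"] fin by (simp add: borel_closed finite_imp_closed)
  show "\<forall>z\<in>S. emeasure (disc_measure S w) {z} > 0"
    using em pos by (auto)
  show "measure (disc_measure S w) UNIV = (\<Sum>z\<in>S. w z)"
    using univ pos by (simp add: measure_def sum_nonneg less_imp_le)
  fix g :: "real \<Rightarrow> real" assume g: "g \<in> borel_measurable borel"
  have "(\<integral>z. g z \<partial>disc_measure S w) = (\<integral>z. g z \<partial>?P)"
    unfolding disc_measure_def using g by (subst integral_distr) auto
  also have "\<dots> = (\<Sum>z\<in>S. w z * g z)"
    using fin pos by (subst lebesgue_integral_point_measure_finite) (auto simp: less_imp_le)
  finally show "(\<integral>z. g z \<partial>disc_measure S w) = (\<Sum>z\<in>S. w z * g z)" .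
qed

lemma disc_F:
  fixes F :: "real measure" and m M \<delta> :: real and r :: "real \<Rightarrow> real" and S0 :: "real set" and wD :: "real \<Rightarrow> real"
  assumes fb: "fin_borel_measure F" and supp: "emeasure F (- {m..M}) = 0" and d: "\<delta> > 0" and mM: "m \<le> M"
  assumes r_def: "r = (\<lambda>z. m + \<delta> * of_int \<lfloor>(z - m) / \<delta>\<rfloor>)"
  assumes S0_def: "S0 = (\<lambda>j::int. m + \<delta> * of_int j) ` {0..\<lfloor>(M - m) / \<delta>\<rfloor>}"
  assumes wD_def: "wD = (\<lambda>s. measure F {z\<in>{m..M}. r z = s})"
  shows "finite S0" "S0 \<subseteq> {m..M}" "\<And>s. wD s \<ge> 0"
    "\<And>z. z \<in> {m..M} \<Longrightarrow> r z \<in> S0 \<and> r z \<le> z \<and> z - r z < \<delta>"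
    "\<And>g. g \<in> borel_measurable borel \<Longrightarrow> integrable F (\<lambda>z. g (r z)) \<and> (\<integral>z. g (r z) \<partial>F) = (\<Sum>s\<in>S0. wD s * g s)"
    "AE z in F. z \<in> {m..M}"
proof -
  have sF: "sets F = sets borel" and finF: "finite_measure F" using fb by (auto simp: fin_borel_measure_def)
  interpret finite_measure F by (rule finF)
  have bm: "borel_measurable F = borel_measurable borel"
    by (rule measurable_cong_sets) (simp_all add: sF)
  show finS0: "finite S0" unfolding S0_def by simp
  show "S0 \<subseteq> {m..M}"
  proof
    fix s assume "s \<in> S0"
    then obtain j where j: "0 \<le> j" "j \<le> \<lfloor>(M - m) / \<delta>\<rfloor>" "s = m + \<delta> * of_int j" unfolding S0_def by auto
    have "of_int j \<le> (M - m) / \<delta>" using j(2) by linarith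
    then have "\<delta> * of_int j \<le> M - m" using d by (metis mult.commute pos_le_divide_eq)
    moreover have "0 \<le> \<delta> * of_int j" using d j(1) by simp
    ultimately show "s \<in> {m..M}" using j(3) by simp
  qed
  show "\<And>s. wD s \<ge> 0" unfolding wD_def by simp
  show rz: "r z \<in> S0 \<and> r z \<le> z \<and> z - r z < \<delta>" if z: "z \<in> {m..M}" for z
  proof -
    let ?j = "\<lfloor>(z - m) / \<delta>\<rfloor>"
    have j0: "0 \<le> ?j" using z d by auto
    have "(z - m) / \<delta> \<le> (M - m) / \<delta>" using z d by (intro divide_right_mono) auto
    then have j1: "?j \<le> \<lfloor>(M - m) / \<delta>\<rfloor>" by (rule floor_mono)
    have "of_int ?j \<le> (z - m) / \<delta>" by linarith
    then have a: "\<delta> * of_int ?j \<le> z - m" using d by (metis mult.commute pos_le_divide_eq)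
    have "(z - m) / \<delta> < of_int ?j + 1" by linarith
    then have "z - m < (of_int ?j + 1) * \<delta>" using d by (metis pos_divide_less_eq)
    then have b: "z - m < \<delta> * of_int ?j + \<delta>" by (simp add: algebra_simps)
    have "r z \<in> S0" using j0 j1 unfolding r_def S0_def by auto
    moreover have "r z \<le> z" using a unfolding r_def by linarith
    moreover have "z - r z < \<delta>" using b unfolding r_def by linarith
    ultimately show ?thesis by blast
  qed
  have rm: "r \<in> borel_measurable borel" unfolding r_def by measurable
  have sets_s: "{z\<in>{m..M}. r z = s} \<in> sets F" for s
  proof -
    have "{z\<in>{m..M}. r z = s} = {m..M} \<inter> r -` {s}" by auto
    also have "\<dots> \<in> sets borel" using rm by (intro sets.Int) (auto simp: measurable_sets_borel)
    finally show ?thesis using sF by simp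
  qed
  have "- {m..M} \<in> null_sets F" using supp sF by (auto simp: null_sets_def)
  then show ae: "AE z in F. z \<in> {m..M}" by (rule AE_I') auto
  fix g :: "real \<Rightarrow> real" assume g: "g \<in> borel_measurable borel"
  let ?h = "\<lambda>z. \<Sum>s\<in>S0. indicator {z\<in>{m..M}. r z = s} z * g s"
  have hint: "integrable F ?h"
  proof (rule Bochner_Integration.integrable_sum)
    fix s assume "s \<in> S0"
    have "integrable F (indicator {z\<in>{m..M}. r z = s} :: real \<Rightarrow> real)"
      using sets_s by (intro integrable_real_indicator) (auto simp: less_top[symmetric])
    then show "integrable F (\<lambda>z. indicator {z\<in>{m..M}. r z = s} z * g s)" by simp
  qed
  have gr: "(\<lambda>z. g (r z)) \<in> borel_measurable F" unfolding bm using measurable_compose[OF rm g] by simp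
  have hm: "?h \<in> borel_measurable F" using hint by auto
  have aeq: "AE z in F. g (r z) = ?h z"
    using ae
  proof (rule AE_mp, intro AE_I2 impI)
    fix z assume z: "z \<in> {m..M}"
    have "?h z = (\<Sum>s\<in>S0. if s = r z then g s else 0)"
      using z by (intro sum.cong) (auto simp: indicator_def)
    also have "\<dots> = g (r z)" using rz[OF z] using finS0 by (simp add: sum.delta)
    finally show "g (r z) = ?h z" by simp
  qed
  have "integrable F (\<lambda>z. g (r z))" using integrable_cong_AE[OF gr hm aeq] hint by simp
  moreover have "(\<integral>z. g (r z) \<partial>F) = (\<Sum>s\<in>S0. wD s * g s)"
  proof -
    have "(\<integral>z. g (r z) \<partial>F) = (\<integral>z. ?h z \<partial>F)" by (rule integral_cong_AE[OF gr hm aeq])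
    also have "\<dots> = (\<Sum>s\<in>S0. wD s * g s)"
      using sets_s by (subst Bochner_Integration.integral_sum) (auto intro!: integrable_real_indicator simp: wD_def less_top[symmetric])
    finally show ?thesis .
  qed
  ultimately show "integrable F (\<lambda>z. g (r z)) \<and> (\<integral>z. g (r z) \<partial>F) = (\<Sum>s\<in>S0. wD s * g s)" by simp
qed

lemma k_lip:
  fixes m M z z' u :: real
  assumes "0 \<le> m" "m \<le> z'" "z' \<le> z" "z \<le> M" "0 \<le> u"
  shows "\<bar>z\<^sup>2 * exp (-(z*u)) - z'\<^sup>2 * exp (-(z'*u))\<bar> \<le> (z - z') * (2*M + M\<^sup>2*u) * exp (-(m*u))"
proof -
  have e1: "exp (-(z*u)) \<le> exp (-(m*u))" using assms by (auto intro: mult_right_mono)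
  have e2: "exp (-(z'*u)) \<le> exp (-(m*u))" using assms by (auto intro: mult_right_mono)
  have d1: "\<bar>z\<^sup>2 - z'\<^sup>2\<bar> \<le> (z - z') * (2*M)"
  proof -
    have "\<bar>z\<^sup>2 - z'\<^sup>2\<bar> = (z - z') * (z + z')" using assms by (simp add: power2_eq_square algebra_simps abs_of_nonneg mult_mono)
    also have "\<dots> \<le> (z - z') * (2*M)" using assms by (intro mult_left_mono) auto
    finally show ?thesis .
  qed
  have d2: "\<bar>exp (-(z*u)) - exp (-(z'*u))\<bar> \<le> (z - z') * u * exp (-(m*u))"
  proof -
    have "exp (-(z*u)) = exp (-(z'*u)) * exp (-((z - z')*u))" by (simp add: algebra_simps flip: exp_add)
    moreover have "exp (-(z*u)) \<le> exp (-(z'*u))" using assms by (simp add: mult_right_mono)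
    ultimately have "\<bar>exp (-(z*u)) - exp (-(z'*u))\<bar> = exp (-(z'*u)) * (1 - exp (-((z - z')*u)))"
      by (simp add: algebra_simps)
    also have "\<dots> \<le> exp (-(m*u)) * ((z - z') * u)"
    proof (intro mult_mono e2)
      have "1 - (z - z') * u \<le> exp (-((z - z')*u))" using exp_ge_add_one_self[of "-((z - z')*u)"] by simp
      then show "1 - exp (-((z - z')*u)) \<le> (z - z') * u" by simp
      show "0 \<le> 1 - exp (-((z - z')*u))" using assms by simp
    qed auto
    finally show ?thesis by (simp add: algebra_simps)
  qed
  have "z\<^sup>2 * exp (-(z*u)) - z'\<^sup>2 * exp (-(z'*u)) = (z\<^sup>2 - z'\<^sup>2) * exp (-(z*u)) + z'\<^sup>2 * (exp (-(z*u)) - exp (-(z'*u)))"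
    by (simp add: algebra_simps)
  then have "\<bar>z\<^sup>2 * exp (-(z*u)) - z'\<^sup>2 * exp (-(z'*u))\<bar> \<le> \<bar>z\<^sup>2 - z'\<^sup>2\<bar> * exp (-(z*u)) + z'\<^sup>2 * \<bar>exp (-(z*u)) - exp (-(z'*u))\<bar>"
    by (simp add: abs_mult abs_triangle_ineq[THEN order_trans])
  also have "\<dots> \<le> ((z - z') * (2*M)) * exp (-(m*u)) + M\<^sup>2 * ((z - z') * u * exp (-(m*u)))"
  proof (intro add_mono mult_mono d1 e1 d2)
    show "z'\<^sup>2 \<le> M\<^sup>2" using assms by (intro power_mono) auto
  qed (use assms in auto)
  also have "\<dots> = (z - z') * (2*M + M\<^sup>2*u) * exp (-(m*u))" by (simp add: algebra_simps)
  finally show ?thesis .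
qed

lemma taylor_exp_neg:
  fixes t :: real assumes t: "0 \<le> t"
  shows "\<bar>exp (-t) - (\<Sum>i<Suc K. (-t)^i / fact i)\<bar> \<le> t^(Suc K) / fact (Suc K)"
proof (cases "t = 0")
  case True
  then show ?thesis by (simp add: sum.lessThan_Suc_shift del: sum.lessThan_Suc)
next
  case False
  then have h: "-t < 0" using t by simp
  from Maclaurin_minus[OF h, of "Suc K" "\<lambda>_. exp" exp]
  obtain \<tau> where tau: "-t < \<tau>" "\<tau> < 0" "exp (-t) = (\<Sum>m<Suc K. exp 0 / fact m * (-t)^m) + exp \<tau> / fact (Suc K) * (-t)^(Suc K)"
    by (auto intro: DERIV_exp)
  have "\<bar>exp (-t) - (\<Sum>i<Suc K. (-t)^i / fact i)\<bar> = exp \<tau> / fact (Suc K) * t^(Suc K)"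
    using tau(3) by (simp add: abs_mult power_abs t)
  also have "\<dots> \<le> 1 / fact (Suc K) * t^(Suc K)"
    using tau(2) t by (intro mult_right_mono divide_right_mono) auto
  finally show ?thesis by simp
qed

lemma block_bound:
  fixes a s u :: real
  assumes a: "0 < a" and s: "a \<le> s" "s \<le> 5/4 * a" and u: "0 \<le> u"
  shows "\<bar>s\<^sup>2 * exp (-(s*u)) - (\<Sum>i<Suc K. (exp (-(a*u)) * (-u)^i / fact i) * (s\<^sup>2 * (s - a)^i))\<bar>
         \<le> (2 * a\<^sup>2) * exp (-(a*u)) * ((a*u/4)^(Suc K) / fact (Suc K))"
proof -
  let ?t = "(s - a) * u"
  have t0: "0 \<le> ?t" using s u by simp
  have "(\<Sum>i<Suc K. (exp (-(a*u)) * (-u)^i / fact i) * (s\<^sup>2 * (s - a)^i))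
      = s\<^sup>2 * exp (-(a*u)) * (\<Sum>i<Suc K. (- ?t)^i / fact i)"
    unfolding sum_distrib_left
  proof (intro sum.cong refl)
    fix i assume "i \<in> {..<Suc K}"
    have "(- ?t)^i = (-u)^i * (s - a)^i" by (simp add: power_mult_distrib[symmetric] algebra_simps)
    then show "(exp (-(a*u)) * (-u)^i / fact i) * (s\<^sup>2 * (s - a)^i) = s\<^sup>2 * exp (-(a*u)) * ((- ?t)^i / fact i)"
      by simp
  qed
  moreover have "s\<^sup>2 * exp (-(s*u)) = s\<^sup>2 * exp (-(a*u)) * exp (- ?t)"
    by (simp add: algebra_simps flip: exp_add)
  ultimately have "\<bar>s\<^sup>2 * exp (-(s*u)) - (\<Sum>i<Suc K. (exp (-(a*u)) * (-u)^i / fact i) * (s\<^sup>2 * (s - a)^i))\<bar>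
      = s\<^sup>2 * exp (-(a*u)) * \<bar>exp (- ?t) - (\<Sum>i<Suc K. (- ?t)^i / fact i)\<bar>"
  proof -
    have gen: "\<And>c x y::real. 0 \<le> c \<Longrightarrow> \<bar>c*x - c*y\<bar> = c*\<bar>x-y\<bar>"
      by (metis abs_mult abs_of_nonneg right_diff_distrib)
    assume e1: "(\<Sum>i<Suc K. (exp (-(a*u)) * (-u)^i / fact i) * (s\<^sup>2 * (s - a)^i)) = s\<^sup>2 * exp (-(a*u)) * (\<Sum>i<Suc K. (- ?t)^i / fact i)"
      and e2: "s\<^sup>2 * exp (-(s*u)) = s\<^sup>2 * exp (-(a*u)) * exp (- ?t)"
    show ?thesis unfolding e1 e2 by (rule gen) simp
  qed
  also have "\<dots> \<le> (2 * a\<^sup>2) * exp (-(a*u)) * ((a*u/4)^(Suc K) / fact (Suc K))"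
  proof (intro mult_mono)
    show "s\<^sup>2 \<le> 2 * a\<^sup>2"
    proof -
      have "s\<^sup>2 \<le> (5/4 * a)\<^sup>2" using s a by (intro power_mono) auto
      also have "\<dots> \<le> 2 * a\<^sup>2" by (simp add: power2_eq_square)
      finally show ?thesis .
    qed
    have "\<bar>exp (- ?t) - (\<Sum>i<Suc K. (- ?t)^i / fact i)\<bar> \<le> ?t^(Suc K) / fact (Suc K)"
      by (rule taylor_exp_neg[OF t0])
    also have "\<dots> \<le> (a*u/4)^(Suc K) / fact (Suc K)"
    proof (intro divide_right_mono power_mono)
      have "(s - a) * u \<le> (a/4) * u" using s u by (intro mult_right_mono) auto
      then show "?t \<le> a*u/4" by simp
    qed (use t0 in auto)
    finally show "\<bar>exp (- ?t) - (\<Sum>i<Suc K. (- ?t)^i / fact i)\<bar> \<le> (a*u/4)^(Suc K) / fact (Suc K)" .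
  qed auto
  finally show ?thesis .
qed

lemma sum_blocks:
  fixes T :: "real set" and w g :: "real \<Rightarrow> real" and \<beta> :: "real \<Rightarrow> nat"
  assumes "finite T" "\<forall>s\<in>T. \<beta> s < B"
  shows "(\<Sum>s\<in>T. w s * g s) = (\<Sum>b<B. \<Sum>s\<in>T. w s * (if \<beta> s = b then g s else 0))"
proof -
  have "(\<Sum>b<B. \<Sum>s\<in>T. w s * (if \<beta> s = b then g s else 0)) = (\<Sum>s\<in>T. \<Sum>b<B. w s * (if \<beta> s = b then g s else 0))"
    by (rule sum.swap)
  also have "\<dots> = (\<Sum>s\<in>T. w s * g s)"
  proof (intro sum.cong refl)
    fix s assume "s \<in> T"
    then have "\<beta> s \<in> {..<B}" using assms by auto
    then show "(\<Sum>b<B. w s * (if \<beta> s = b then g s else 0)) = w s * g s"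
      by (simp add: sum.delta if_distrib[where f="\<lambda>x. w s * x"] cong: if_cong)
  qed
  finally show ?thesis by simp
qed

lemma sum_poly_swap:
  fixes T :: "real set" and w :: "real \<Rightarrow> real" and c :: "nat \<Rightarrow> real" and g :: "nat \<Rightarrow> real \<Rightarrow> real"
  shows "(\<Sum>s\<in>T. w s * (if \<beta> s = b then (\<Sum>i<n. c i * g i s) else 0))
       = (\<Sum>i<n. c i * (\<Sum>s\<in>T. w s * (if \<beta> s = b then g i s else 0)))"
proof -
  have "(\<Sum>s\<in>T. w s * (if \<beta> s = b then (\<Sum>i<n. c i * g i s) else 0))
      = (\<Sum>s\<in>T. \<Sum>i<n. c i * (w s * (if \<beta> s = b then g i s else 0)))"
    by (intro sum.cong refl) (auto simp: sum_distrib_left algebra_simps)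
  also have "\<dots> = (\<Sum>i<n. \<Sum>s\<in>T. c i * (w s * (if \<beta> s = b then g i s else 0)))"
    by (rule sum.swap)
  also have "\<dots> = (\<Sum>i<n. c i * (\<Sum>s\<in>T. w s * (if \<beta> s = b then g i s else 0)))"
    by (simp add: sum_distrib_left)
  finally show ?thesis .
qed

lemma blocks_bound:
  fixes S0 S :: "real set" and wD wG :: "real \<Rightarrow> real" and \<beta> :: "real \<Rightarrow> nat" and a :: "nat \<Rightarrow> real"
  assumes fin: "finite S0" "finite S" and wpos: "\<forall>s\<in>S0. wD s \<ge> 0" "\<forall>s\<in>S. wG s \<ge> 0"
    and blk: "\<forall>s\<in>S0 \<union> S. \<beta> s < B \<and> a (\<beta> s) \<le> s \<and> s \<le> 5/4 * a (\<beta> s)" and apos: "\<forall>b. a b > 0"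
    and mass: "\<forall>b<B. (\<Sum>s\<in>S. wG s * (if \<beta> s = b then 1 else 0)) = (\<Sum>s\<in>S0. wD s * (if \<beta> s = b then 1 else 0))"
    and mom: "\<forall>b<B. \<forall>i<Suc K. (\<Sum>s\<in>S. wG s * (if \<beta> s = b then s\<^sup>2 * (s - a b)^i else 0))
                               = (\<Sum>s\<in>S0. wD s * (if \<beta> s = b then s\<^sup>2 * (s - a b)^i else 0))"
    and u: "0 \<le> u"
  shows "\<bar>(\<Sum>s\<in>S0. wD s * (s\<^sup>2 * exp (-(s*u)))) - (\<Sum>s\<in>S. wG s * (s\<^sup>2 * exp (-(s*u))))\<bar>
     \<le> (\<Sum>b<B. 2 * (\<Sum>s\<in>S0. wD s * (if \<beta> s = b then 1 else 0)) *
            ((2 * (a b)\<^sup>2) * exp (-(a b*u)) * ((a b*u/4)^(Suc K) / fact (Suc K))))"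
proof -
  define k where "k s = s\<^sup>2 * exp (-(s*u))" for s
  define c where "c b i = exp (-(a b*u)) * (-u)^i / fact i" for b i
  define P where "P b s = (\<Sum>i<Suc K. c b i * (s\<^sup>2 * (s - a b)^i))" for b s
  define R where "R b = (2 * (a b)\<^sup>2) * exp (-(a b*u)) * ((a b*u/4)^(Suc K) / fact (Suc K))" for b
  define mD where "mD b = (\<Sum>s\<in>S0. wD s * (if \<beta> s = b then 1 else 0))" for b
  define D where "D b = (\<Sum>s\<in>S0. wD s * (if \<beta> s = b then k s else 0)) - (\<Sum>s\<in>S. wG s * (if \<beta> s = b then k s else 0))" for b
  have kP: "\<bar>k s - P b s\<bar> \<le> R b" if "s \<in> S0 \<union> S" "\<beta> s = b" for s b
  proof -
    from blk that have h: "a b \<le> s" "s \<le> 5/4 * a b" by auto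
    show ?thesis unfolding k_def P_def c_def R_def by (rule block_bound[OF apos[rule_format] h u])
  qed
  have split: "(\<Sum>s\<in>S0. wD s * k s) - (\<Sum>s\<in>S. wG s * k s) = (\<Sum>b<B. D b)"
  proof -
    have "(\<Sum>s\<in>S0. wD s * k s) = (\<Sum>b<B. \<Sum>s\<in>S0. wD s * (if \<beta> s = b then k s else 0))"
      using blk by (intro sum_blocks fin) auto
    moreover have "(\<Sum>s\<in>S. wG s * k s) = (\<Sum>b<B. \<Sum>s\<in>S. wG s * (if \<beta> s = b then k s else 0))"
      using blk by (intro sum_blocks fin) auto
    ultimately show ?thesis by (simp add: D_def sum_subtractf)
  qed
  have Db: "\<bar>D b\<bar> \<le> 2 * mD b * R b" if b: "b < B" for b
  proof -
    have PP: "(\<Sum>s\<in>S0. wD s * (if \<beta> s = b then P b s else 0)) = (\<Sum>s\<in>S. wG s * (if \<beta> s = b then P b s else 0))"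
      unfolding P_def sum_poly_swap using mom b by simp
    have eqD: "D b = (\<Sum>s\<in>S0. wD s * (if \<beta> s = b then k s - P b s else 0)) - (\<Sum>s\<in>S. wG s * (if \<beta> s = b then k s - P b s else 0))"
    proof -
      have "(\<Sum>s\<in>S0. wD s * (if \<beta> s = b then k s - P b s else 0)) = (\<Sum>s\<in>S0. wD s * (if \<beta> s = b then k s else 0)) - (\<Sum>s\<in>S0. wD s * (if \<beta> s = b then P b s else 0))"
        unfolding sum_subtractf[symmetric] by (intro sum.cong refl) (simp add: right_diff_distrib)
      moreover have "(\<Sum>s\<in>S. wG s * (if \<beta> s = b then k s - P b s else 0)) = (\<Sum>s\<in>S. wG s * (if \<beta> s = b then k s else 0)) - (\<Sum>s\<in>S. wG s * (if \<beta> s = b then P b s else 0))"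
        unfolding sum_subtractf[symmetric] by (intro sum.cong refl) (simp add: right_diff_distrib)
      ultimately show ?thesis using PP unfolding D_def by linarith
    qed
    have "\<bar>D b\<bar> \<le> (\<Sum>s\<in>S0. wD s * (if \<beta> s = b then R b else 0)) + (\<Sum>s\<in>S. wG s * (if \<beta> s = b then R b else 0))"
    proof -
      have A: "\<bar>\<Sum>s\<in>T. w s * (if \<beta> s = b then k s - P b s else 0)\<bar> \<le> (\<Sum>s\<in>T. w s * (if \<beta> s = b then R b else 0))"
        if T: "T \<subseteq> S0 \<union> S" "\<forall>s\<in>T. w s \<ge> 0" for T w
      proof -
        have "\<bar>\<Sum>s\<in>T. w s * (if \<beta> s = b then k s - P b s else 0)\<bar> \<le> (\<Sum>s\<in>T. \<bar>w s * (if \<beta> s = b then k s - P b s else 0)\<bar>)"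
          by (rule sum_abs)
        also have "\<dots> \<le> (\<Sum>s\<in>T. w s * (if \<beta> s = b then R b else 0))"
        proof (rule sum_mono)
          fix s assume s: "s \<in> T"
          show "\<bar>w s * (if \<beta> s = b then k s - P b s else 0)\<bar> \<le> w s * (if \<beta> s = b then R b else 0)"
          proof (cases "\<beta> s = b")
            case True
            have "\<bar>w s * (k s - P b s)\<bar> = w s * \<bar>k s - P b s\<bar>" using T s by (simp add: abs_mult)
            also have "\<dots> \<le> w s * R b" using kP[of s b] T s True by (intro mult_left_mono) auto
            finally show ?thesis using True by simp
          qed (use T s in simp)
        qed
        finally show ?thesis .
      qed
      have "\<bar>(\<Sum>s\<in>S0. wD s * (if \<beta> s = b then k s - P b s else 0)) - (\<Sum>s\<in>S. wG s * (if \<beta> s = b then k s - P b s else 0))\<bar>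
         \<le> \<bar>\<Sum>s\<in>S0. wD s * (if \<beta> s = b then k s - P b s else 0)\<bar> + \<bar>\<Sum>s\<in>S. wG s * (if \<beta> s = b then k s - P b s else 0)\<bar>"
        by (rule abs_triangle_ineq4)
      also have "\<dots> \<le> (\<Sum>s\<in>S0. wD s * (if \<beta> s = b then R b else 0)) + (\<Sum>s\<in>S. wG s * (if \<beta> s = b then R b else 0))"
        using wpos by (intro add_mono A) auto
      finally show ?thesis unfolding eqD .
    qed
    also have "\<dots> = 2 * mD b * R b"
    proof -
      have g: "(\<Sum>s\<in>T. w s * (if \<beta> s = b then R b else 0)) = (\<Sum>s\<in>T. w s * (if \<beta> s = b then 1 else 0)) * R b" for T w
        unfolding sum_distrib_right by (intro sum.cong refl) simp
      have e1: "(\<Sum>s\<in>S0. wD s * (if \<beta> s = b then R b else 0)) = mD b * R b" unfolding mD_def by (rule g)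
      have e2: "(\<Sum>s\<in>S. wG s * (if \<beta> s = b then R b else 0)) = mD b * R b"
      proof -
        have mb: "(\<Sum>s\<in>S. wG s * (if \<beta> s = b then 1 else 0)) = mD b" unfolding mD_def using mass b by blast
        show ?thesis by (simp only: g mb)
      qed
      show ?thesis unfolding e1 e2 by simp
    qed
    finally show ?thesis .
  qed
  have "\<bar>(\<Sum>s\<in>S0. wD s * k s) - (\<Sum>s\<in>S. wG s * k s)\<bar> \<le> (\<Sum>b<B. \<bar>D b\<bar>)"
    unfolding split by (rule sum_abs)
  also have "\<dots> \<le> (\<Sum>b<B. 2 * mD b * R b)"
    using Db by (intro sum_mono) auto
  finally show ?thesis unfolding k_def mD_def R_def .
qed

lemma hbi_pow_exp:
  fixes a :: real
  assumes a: "0 < a"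
  shows "has_bochner_integral lborel (\<lambda>u. indicator {0..} u * (u^k * exp (-(a*u)))) (fact k / a^(k+1))"
proof (rule Bochner_Integration.has_bochner_integral_nn_integral)
  show "(\<lambda>u. indicator {0..} u * (u^k * exp (-(a*u)))) \<in> borel_measurable lborel" by measurable
  show "AE x in lborel. 0 \<le> indicator {0..} x * (x ^ k * exp (- (a * x)))"
    by (intro AE_I2) (auto simp: indicator_def)
  show "0 \<le> fact k / a^(k+1)" using a by simp
  have "(\<integral>\<^sup>+ x. ennreal (indicator {0..} x * (x ^ k * exp (- (a * x)))) \<partial>lborel)
      = (\<integral>\<^sup>+x. ennreal (x^k * exp (-(a*x))) * indicator {0..} x \<partial>lborel)"
    by (intro nn_integral_cong) (auto simp: indicator_def)
  then show "(\<integral>\<^sup>+ x. ennreal (indicator {0..} x * (x ^ k * exp (- (a * x)))) \<partial>lborel) = ennreal (fact k / a^(k+1))"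
    using nn_int_pow_exp[OF a, of k] by simp
qed

lemma ac1: "(u::real) * (c * (t * e * (p * v / f))) = c * (t * p / f) * (u * v * e)"
  by (simp add: divide_inverse mult_ac)

lemma ac2:
  fixes c q p w f k :: real
  assumes "q \<noteq> 0" "p \<noteq> 0" "w \<noteq> 0" "f \<noteq> 0"
  shows "c * (2 * q * (p / w) / f) * ((k * f) / (q * p)) = c * (2 * k / w)"
  using assms by (simp add: field_simps)

lemma phi_integral:
  fixes A m M :: real and cB a :: "nat \<Rightarrow> real" and B K :: nat
  assumes m: "0 < m" and M: "0 \<le> M" and A: "0 \<le> A" and cB: "\<forall>b. 0 \<le> cB b" and apos: "\<forall>b. 0 < a b"
  defines "\<phi> \<equiv> \<lambda>u. A * (2*M + M\<^sup>2*u) * exp (-(m*u)) + (\<Sum>b<B. cB b * ((2 * (a b)\<^sup>2) * exp (-(a b*u)) * ((a b*u/4)^(Suc K) / fact (Suc K))))"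
  shows "(\<integral>\<^sup>+u. ennreal (u * \<phi> u) * indicator {0..} u \<partial>lborel)
     = ennreal (A * (2*M/m\<^sup>2 + 2*M\<^sup>2/m^3) + (\<Sum>b<B. cB b * (2 * (K+2) / 4^(Suc K))))"
proof -
  define g where "g k c u = indicator {0..} u * (u^k * exp (-(c*u)))" for k :: nat and c u :: real
  define co where "co b = cB b * (2 * (a b)\<^sup>2 * (a b / 4)^(Suc K) / fact (Suc K))" for b
  have eqf: "indicator {0..} u * (u * \<phi> u) = (A*(2*M)) * g 1 m u + (A*M\<^sup>2) * g 2 m u + (\<Sum>b<B. co b * g (K+2) (a b) u)" for u
  proof -
    have "u * (cB b * ((2 * (a b)\<^sup>2) * exp (-(a b*u)) * ((a b*u/4)^(Suc K) / fact (Suc K)))) = co b * (u^(K+2) * exp (-(a b*u)))" for b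
    proof -
      have h1: "(a b*u/4)^(Suc K) = (a b/4)^(Suc K) * u^(Suc K)"
        by (simp add: power_mult_distrib[symmetric])
      have h2: "u^(K+2) = u * u^(Suc K)" by simp
      show ?thesis unfolding co_def h1 h2 by (rule ac1)
    qed
    then have "u * (\<Sum>b<B. cB b * ((2 * (a b)\<^sup>2) * exp (-(a b*u)) * ((a b*u/4)^(Suc K) / fact (Suc K)))) = (\<Sum>b<B. co b * (u^(K+2) * exp (-(a b*u))))"
      unfolding sum_distrib_left by (intro sum.cong refl)
    note X = this
    show ?thesis
    proof (cases "0 \<le> u")
      case True
      have "u * \<phi> u = A*(2*M) * (u^1 * exp (-(m*u))) + A*M\<^sup>2 * (u^2 * exp (-(m*u))) + u * (\<Sum>b<B. cB b * ((2 * (a b)\<^sup>2) * exp (-(a b*u)) * ((a b*u/4)^(Suc K) / fact (Suc K))))"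
        unfolding \<phi>_def by (simp add: ring_distribs power2_eq_square mult_ac)
      then show ?thesis unfolding X g_def using True by simp
    next
      case False
      then show ?thesis unfolding g_def by simp
    qed
  qed
  have hb: "has_bochner_integral lborel (\<lambda>u. indicator {0..} u * (u * \<phi> u))
      ((A*(2*M)) * (fact 1 / m^2) + (A*M\<^sup>2) * (fact 2 / m^3) + (\<Sum>b<B. co b * (fact (K+2) / (a b)^(K+3))))"
    unfolding eqf
  proof (intro has_bochner_integral_add has_bochner_integral_mult_right has_bochner_integral_sum)
    show "has_bochner_integral lborel (g 1 m) (fact 1 / m^2)"
      unfolding g_def using hbi_pow_exp[OF m, of 1] by (simp add: numeral_2_eq_2)
    show "has_bochner_integral lborel (g 2 m) (fact 2 / m^3)"
      unfolding g_def using hbi_pow_exp[OF m, of 2] by (simp add: numeral_3_eq_3)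
    fix b assume "b \<in> {..<B}"
    show "has_bochner_integral lborel (g (K+2) (a b)) (fact (K+2) / (a b)^(K+3))"
      unfolding g_def using hbi_pow_exp[OF apos[rule_format, of b], of "K+2"] by (simp add: numeral_3_eq_3)
  qed
  have val: "(A*(2*M)) * (fact 1 / m^2) + (A*M\<^sup>2) * (fact 2 / m^3) + (\<Sum>b<B. co b * (fact (K+2) / (a b)^(K+3)))
      = A * (2*M/m\<^sup>2 + 2*M\<^sup>2/m^3) + (\<Sum>b<B. cB b * (2 * (K+2) / 4^(Suc K)))"
  proof -
    have "co b * (fact (K+2) / (a b)^(K+3)) = cB b * (2 * (K+2) / 4^(Suc K))" for b
    proof -
      have ab: "a b > 0" using apos by auto
      have f: "fact (K+2) = (real K + 2) * fact (Suc K)" by (simp add: algebra_simps)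
      have p: "(a b)^(K+3) = (a b)\<^sup>2 * (a b)^(Suc K)" by (simp add: power_add[symmetric] numeral_3_eq_3)
      have "cB b * (2 * (a b)\<^sup>2 * ((a b)^(Suc K) / 4^(Suc K)) / fact (Suc K)) * (((real K + 2) * fact (Suc K)) / ((a b)\<^sup>2 * (a b)^(Suc K)))
          = cB b * (2 * (real K + 2) / 4^(Suc K))"
        by (rule ac2) (use ab in auto)
      then show ?thesis unfolding co_def f p power_divide by simp
    qed
    then have "(\<Sum>b<B. co b * (fact (K+2) / (a b)^(K+3))) = (\<Sum>b<B. cB b * (2 * (K+2) / 4^(Suc K)))"
      by (intro sum.cong refl)
    moreover have "(A*(2*M)) * (fact 1 / m^2) + (A*M\<^sup>2) * (fact 2 / m^3) = A * (2*M/m\<^sup>2 + 2*M\<^sup>2/m^3)"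
      by (simp add: ring_distribs)
    ultimately show ?thesis by simp
  qed
  have int: "integrable lborel (\<lambda>u. indicator {0..} u * (u * \<phi> u))" using hb by (rule integrable.intros)
  have nn: "AE u in lborel. 0 \<le> indicator {0..} u * (u * \<phi> u)"
  proof (intro AE_I2)
    fix u :: real
    show "0 \<le> indicator {0..} u * (u * \<phi> u)"
    proof (cases "0 \<le> u")
      case True
      have ap': "\<forall>b. 0 \<le> a b" using apos less_imp_le by blast
      have "0 \<le> \<phi> u" unfolding \<phi>_def using True A cB ap' m M
        by (intro add_nonneg_nonneg mult_nonneg_nonneg sum_nonneg divide_nonneg_nonneg zero_le_power) auto
      then show ?thesis using True by simp
    qed simp
  qed
  have "(\<integral>\<^sup>+u. ennreal (u * \<phi> u) * indicator {0..} u \<partial>lborel) = (\<integral>\<^sup>+u. ennreal (indicator {0..} u * (u * \<phi> u)) \<partial>lborel)"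
    by (intro nn_integral_cong) (auto simp: indicator_def)
  also have "\<dots> = ennreal (integral\<^sup>L lborel (\<lambda>u. indicator {0..} u * (u * \<phi> u)))"
    by (rule nn_integral_eq_integral[OF int nn])
  also have "\<dots> = ennreal (A * (2*M/m\<^sup>2 + 2*M\<^sup>2/m^3) + (\<Sum>b<B. cB b * (2 * (K+2) / 4^(Suc K))))"
    using has_bochner_integral_integral_eq[OF hb] val by simp
  finally show ?thesis .
qed

lemma block_index:
  fixes m M :: real and B :: nat and \<beta> :: "real \<Rightarrow> nat"
  assumes m: "0 < m" and mM: "m < M"
  assumes B_def: "B = nat \<lceil>4 * M / m\<rceil>"
  assumes beta_def: "\<beta> = (\<lambda>s. LEAST b. s < m * (5/4)^(Suc b))"
  shows "\<forall>s\<in>{m..M}. \<beta> s < B \<and> m * (5/4)^(\<beta> s) \<le> s \<and> s \<le> 5/4 * (m * (5/4)^(\<beta> s))"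
    and "real B \<le> 5 * M / m"
proof -
  have r1: "M / m > 1" using m mM by simp
  have B1: "real B \<ge> 4 * M / m" unfolding B_def by (rule real_nat_ceiling_ge)
  have B2: "real B \<le> 4 * M / m + 1" unfolding B_def using m mM
    by (simp add: of_nat_nat)
  show "real B \<le> 5 * M / m" using B2 r1 by simp
  have Bpos: "B \<ge> 1" using B1 r1 by (cases B) auto
  have "1 + real B * (1/4) \<le> (1 + 1/4::real)^B" by (rule Bernoulli_inequality) simp
  then have pw: "1 + M / m \<le> (5/4::real)^B" using B1 by simp
  have big: "M < m * (5/4)^B"
  proof -
    have "m * (1 + M / m) \<le> m * (5/4)^B" using pw m by (intro mult_left_mono) auto
    moreover have "m * (1 + M / m) = m + M" using m by (simp add: field_simps)
    ultimately show ?thesis using m by simp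
  qed
  show "\<forall>s\<in>{m..M}. \<beta> s < B \<and> m * (5/4)^(\<beta> s) \<le> s \<and> s \<le> 5/4 * (m * (5/4)^(\<beta> s))"
  proof
    fix s assume s: "s \<in> {m..M}"
    have ex: "s < m * (5/4)^(Suc (B - 1))" using big s Bpos by simp
    have lt: "s < m * (5/4)^(Suc (\<beta> s))" unfolding beta_def by (rule LeastI[of _ "B - 1"]) (rule ex)
    have le: "\<beta> s \<le> B - 1" unfolding beta_def by (rule Least_le) (rule ex)
    have lo: "m * (5/4)^(\<beta> s) \<le> s"
    proof (cases "\<beta> s")
      case 0 then show ?thesis using s by simp
    next
      case (Suc b)
      have "\<not> s < m * (5/4)^(Suc b)"
        using not_less_Least[of b "\<lambda>b. s < m * (5/4)^(Suc b)"] Suc unfolding beta_def by simp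
      then show ?thesis using Suc by simp
    qed
    have "s \<le> 5/4 * (m * (5/4)^(\<beta> s))" using lt by (simp add: algebra_simps)
    then show "\<beta> s < B \<and> m * (5/4)^(\<beta> s) \<le> s \<and> s \<le> 5/4 * (m * (5/4)^(\<beta> s))"
      using le lo Bpos by auto
  qed
qed

lemma K_facts:
  fixes \<epsilon> :: real and K :: nat
  assumes e: "0 < \<epsilon>" "\<epsilon> < 1/2" and K_def: "K = nat \<lceil>2 * ln (8/\<epsilon>)\<rceil>"
  shows "8/\<epsilon> \<le> 2^K" and "real K + 2 < 16 * ln (1/\<epsilon>)" and "ln (1/\<epsilon>) > 2/3"
proof -
  have l2: "2/3 \<le> ln (2::real)" by (rule ln2_ge_two_thirds)
  have l2': "ln (2::real) < 1" by (rule ln_2_less_1)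
  have L: "ln (1/\<epsilon>) > ln 2" using e by (intro ln_less_cancel_iff[THEN iffD2]) (auto simp: field_simps)
  then show "ln (1/\<epsilon>) > 2/3" using l2 by simp
  have e8: "8/\<epsilon> > 1" using e by (simp add: field_simps)
  then have lpos: "ln (8/\<epsilon>) > 0" by (rule ln_gt_zero)
  have K1: "real K \<ge> 2 * ln (8/\<epsilon>)" unfolding K_def by (rule real_nat_ceiling_ge)
  have K2: "real K \<le> 2 * ln (8/\<epsilon>) + 1" unfolding K_def using lpos
    by (simp add: of_nat_nat)
  have "(2::real)^K = exp (real K * ln 2)" by (simp add: exp_of_nat_mult)
  also have "exp (real K * ln 2) \<ge> exp (ln (8/\<epsilon>))"
  proof -
    have "ln (8/\<epsilon>) \<le> 2 * ln (8/\<epsilon>) * ln 2" using lpos l2 by (simp add: mult_le_cancel_left1 mult.assoc)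
    also have "\<dots> \<le> real K * ln 2" using K1 l2 by (intro mult_right_mono) auto
    finally show ?thesis by simp
  qed
  finally show "8/\<epsilon> \<le> 2^K" using e by simp
  have "ln (8/\<epsilon>) = ln 8 + ln (1/\<epsilon>)" using e by (simp add: ln_div)
  moreover have "ln (8::real) = 3 * ln 2"
    using ln_realpow[of "2::real" 3] by simp
  ultimately have "real K \<le> 2 * (3 * ln 2 + ln (1/\<epsilon>)) + 1" using K2 by simp
  moreover have "2 * (3 * ln 2 + ln (1/\<epsilon>)) + 1 < 2 * ln (1/\<epsilon>) + 7" using l2' by simp
  moreover have "2 * ln (1/\<epsilon>) + 9 < 16 * ln (1/\<epsilon>)" using L l2 by simp
  ultimately show "real K + 2 < 16 * ln (1/\<epsilon>)" by simp
qed

lemma tri3: "\<bar>(a::real) - c\<bar> \<le> \<bar>a - b\<bar> + \<bar>b - c\<bar>"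
  by linarith

theorem mainTheorem4:
  shows "\<exists>C::real. C > 0 \<and>
    (\<forall>(\<theta>::real) (m::real) (M::real) (F::real measure) (\<epsilon>::real).
       \<theta> > 0 \<longrightarrow> 0 < m \<longrightarrow> m < M \<longrightarrow>
       fin_borel_measure F \<longrightarrow> emeasure F (- {m..M}) = 0 \<longrightarrow> emeasure F UNIV > 0 \<longrightarrow>
       0 < \<epsilon> \<longrightarrow> \<epsilon> < 1/2 \<longrightarrow>
       (\<exists>(Fe::real measure) (S::real set).
          fin_borel_measure Fe \<and> finite S \<and> S \<subseteq> {0<..} \<and>
          emeasure Fe (- S) = 0 \<and> (\<forall>z\<in>S. emeasure Fe {z} > 0) \<and>
          measure Fe UNIV = measure F UNIV \<and>
          real (card S) < C * (M / m) * ln (1 / \<epsilon>) \<and>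
          L1_dist (p_mix \<theta> F) (p_mix \<theta> Fe) < ennreal (measure F UNIV * \<epsilon>)))"
proof (intro exI[of _ "200::real"] conjI allI impI)
  show "(200::real) > 0" by simp
next
  fix \<theta> m M :: real and F :: "real measure" and \<epsilon> :: real
  assume th: "\<theta> > 0" and m: "0 < m" and mM: "m < M" and fb: "fin_borel_measure F"
    and supp: "emeasure F (- {m..M}) = 0" and Fpos: "emeasure F UNIV > 0" and e0: "0 < \<epsilon>" and e1: "\<epsilon> < 1/2"
  have sF: "sets F = sets borel" and finF: "finite_measure F" using fb unfolding fin_borel_measure_def by auto
  interpret F: finite_measure F by (rule finF)
  have spF: "space F = UNIV" using sets_eq_imp_space_eq[OF sF] by simp
  define \<mu> where "\<mu> = measure F UNIV"
  have mupos: "\<mu> > 0" using Fpos F.emeasure_eq_measure[of UNIV] unfolding \<mu>_def by simp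
  have M0: "0 < M" using m mM by simp
  define \<delta> where "\<delta> = \<epsilon> * m^3 / (8 * (M*m + M\<^sup>2))"
  have dpos: "\<delta> > 0" unfolding \<delta>_def using e0 m M0 by (intro divide_pos_pos mult_pos_pos add_pos_pos) auto
  define r where "r = (\<lambda>z. m + \<delta> * of_int \<lfloor>(z - m) / \<delta>\<rfloor>)"
  define S0 where "S0 = (\<lambda>j::int. m + \<delta> * of_int j) ` {0..\<lfloor>(M - m) / \<delta>\<rfloor>}"
  define wD where "wD = (\<lambda>s. measure F {z\<in>{m..M}. r z = s})"
  note DF = disc_F[OF fb supp dpos less_imp_le[OF mM] r_def S0_def wD_def]
  have finS0: "finite S0" and S0sub: "S0 \<subseteq> {m..M}" and wDnn: "\<forall>s\<in>S0. wD s \<ge> 0"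
    using DF(1,2,3) by auto
  have intg: "integrable F (\<lambda>z. g (r z)) \<and> (\<integral>z. g (r z) \<partial>F) = (\<Sum>s\<in>S0. wD s * g s)"
    if "g \<in> borel_measurable borel" for g using DF(5)[OF that] .
  have sumwD: "(\<Sum>s\<in>S0. wD s) = \<mu>"
    using intg[of "\<lambda>_. 1"] by (simp add: spF \<mu>_def)

  define B where "B = nat \<lceil>4 * M / m\<rceil>"
  define \<beta> where "\<beta> = (\<lambda>s::real. LEAST b. s < m * (5/4)^(Suc b))"
  define a where "a = (\<lambda>b::nat. m * (5/4)^b)"
  note BI = block_index[OF m mM B_def \<beta>_def]
  have blk: "\<forall>s\<in>{m..M}. \<beta> s < B \<and> a (\<beta> s) \<le> s \<and> s \<le> 5/4 * a (\<beta> s)"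
    using BI(1) unfolding a_def by simp
  have apos: "\<forall>b. a b > 0" using m unfolding a_def by simp
  define K where "K = nat \<lceil>2 * ln (8/\<epsilon>)\<rceil>"
  note KF = K_facts[OF e0 e1 K_def]
  define f where "f = (\<lambda>j s. if \<beta> s = j div (K+2) then (if j mod (K+2) = 0 then 1 else s\<^sup>2 * (s - a (j div (K+2)))^(j mod (K+2) - 1)) else (0::real))"
  obtain S wG where red: "S \<subseteq> S0" "card S \<le> B*(K+2)+1" "\<forall>z\<in>S. wG z > 0" "(\<Sum>z\<in>S. wG z) = (\<Sum>z\<in>S0. wD z)"
    "\<forall>j<B*(K+2). (\<Sum>z\<in>S. wG z * f j z) = (\<Sum>z\<in>S0. wD z * f j z)"
    using reduce[OF finS0 wDnn, of "B*(K+2)" f] by blast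
  have finS: "finite S" using red(1) finS0 by (rule finite_subset)
  have mass: "\<forall>b<B. (\<Sum>s\<in>S. wG s * (if \<beta> s = b then 1 else 0)) = (\<Sum>s\<in>S0. wD s * (if \<beta> s = b then 1 else 0))"
  proof (intro allI impI)
    fix b assume b: "b < B"
    have j: "b*(K+2) < B*(K+2)" using b by (intro mult_strict_right_mono) auto
    have d0: "(b*(K+2)) div (K+2) = b" by (rule nonzero_mult_div_cancel_right) simp
    have m0: "(b*(K+2)) mod (K+2) = 0" by (metis mod_mult_self1_is_0 mult.commute)
    have fj: "f (b*(K+2)) s = (if \<beta> s = b then 1 else 0)" for s unfolding f_def d0 m0 by simp
    show "(\<Sum>s\<in>S. wG s * (if \<beta> s = b then 1 else 0)) = (\<Sum>s\<in>S0. wD s * (if \<beta> s = b then 1 else 0))"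
      using red(5)[rule_format, OF j] unfolding fj .
  qed
  have mom: "\<forall>b<B. \<forall>i<Suc K. (\<Sum>s\<in>S. wG s * (if \<beta> s = b then s\<^sup>2 * (s - a b)^i else 0))
                               = (\<Sum>s\<in>S0. wD s * (if \<beta> s = b then s\<^sup>2 * (s - a b)^i else 0))"
  proof (intro allI impI)
    fix b i assume b: "b < B" and i: "i < Suc K"
    have d: "(b*(K+2) + Suc i) div (K+2) = b" using i by (subst div_mult_self3) auto
    have md: "(b*(K+2) + Suc i) mod (K+2) = Suc i" using i by (subst mod_mult_self3) auto
    have "b*(K+2) + Suc i < Suc b * (K+2)" using i by simp
    also have "\<dots> \<le> B*(K+2)" using b by (intro mult_right_mono) auto
    finally have j: "b*(K+2) + Suc i < B*(K+2)" .
    have fj: "f (b*(K+2) + Suc i) s = (if \<beta> s = b then s\<^sup>2 * (s - a b)^i else 0)" for s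
      unfolding f_def d md by simp
    show "(\<Sum>s\<in>S. wG s * (if \<beta> s = b then s\<^sup>2 * (s - a b)^i else 0))
        = (\<Sum>s\<in>S0. wD s * (if \<beta> s = b then s\<^sup>2 * (s - a b)^i else 0))"
      using red(5)[rule_format, OF j] unfolding fj .
  qed
  define Fe where "Fe = disc_measure S wG"
  note DP = disc_measure_props[OF finS red(3), folded Fe_def]
  have Ssub: "S \<subseteq> {0<..}" using red(1) S0sub m by auto
  have massFe: "measure Fe UNIV = measure F UNIV"
    using DP(4) red(4) sumwD unfolding \<mu>_def by simp

  show "\<exists>(Fe::real measure) (S::real set).
          fin_borel_measure Fe \<and> finite S \<and> S \<subseteq> {0<..} \<and>
          emeasure Fe (- S) = 0 \<and> (\<forall>z\<in>S. emeasure Fe {z} > 0) \<and>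
          measure Fe UNIV = measure F UNIV \<and>
          real (card S) < 200 * (M / m) * ln (1 / \<epsilon>) \<and>
          L1_dist (p_mix \<theta> F) (p_mix \<theta> Fe) < ennreal (measure F UNIV * \<epsilon>)"
  proof (intro exI[of _ Fe] exI[of _ S] conjI)
    show "fin_borel_measure Fe" "finite S" "S \<subseteq> {0<..}" "emeasure Fe (- S) = 0"
      "\<forall>z\<in>S. emeasure Fe {z} > 0" "measure Fe UNIV = measure F UNIV"
      using DP(1,2,3) finS Ssub massFe by auto
    show "real (card S) < 200 * (M / m) * ln (1 / \<epsilon>)"
    proof -
      define L where "L = ln (1 / \<epsilon>)"
      define q where "q = M / m"
      have q1: "q > 1" unfolding q_def using m mM by simp
      have L23: "L > 2/3" unfolding L_def using KF(3) .
      have c1: "real (card S) \<le> real B * (real K + 2) + 1"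
      proof -
        have "real (card S) \<le> real (B*(K+2)+1)" using red(2) by (simp only: of_nat_le_iff)
        then show ?thesis by (simp add: algebra_simps)
      qed
      have c2: "real B * (real K + 2) \<le> (5 * q) * (16 * L)"
      proof (intro mult_mono)
        show "real B \<le> 5 * q" using BI(2) unfolding q_def by simp
        show "real K + 2 \<le> 16 * L" using KF(2) unfolding L_def by simp
        show "0 \<le> 5 * q" using q1 by simp
        show "0 \<le> real K + 2" by simp
      qed
      have c3: "q * L > 1 * (2/3)" using q1 L23 by (intro mult_strict_mono) auto
      have e: "(5 * q) * (16 * L) = 80 * (q * L)" by simp
      have e2: "200 * q * L = 200 * (q * L)" by simp
      have "real (card S) < 200 * q * L" using c1 c2 c3 unfolding e e2 by linarith
      then show ?thesis unfolding q_def L_def .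
    qed
    show "L1_dist (p_mix \<theta> F) (p_mix \<theta> Fe) < ennreal (measure F UNIV * \<epsilon>)"
    proof -
      have bmF: "borel_measurable F = borel_measurable borel"
        by (rule measurable_cong_sets) (simp_all add: sF)
      define mD where "mD b = (\<Sum>s\<in>S0. wD s * (if \<beta> s = b then 1 else 0))" for b
      define \<phi> where "\<phi> = (\<lambda>u. (\<delta>*\<mu>) * (2*M + M\<^sup>2*u) * exp (-(m*u)) + (\<Sum>b<B. (2 * mD b) * ((2 * (a b)\<^sup>2) * exp (-(a b*u)) * ((a b*u/4)^(Suc K) / fact (Suc K)))))"
      have mDnn: "\<forall>b. 0 \<le> mD b" using wDnn unfolding mD_def by (auto intro!: sum_nonneg)
      have wGnn: "\<forall>s\<in>S. wG s \<ge> 0" using red(3) less_imp_le by blast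
      have blk2: "\<forall>s\<in>S0 \<union> S. \<beta> s < B \<and> a (\<beta> s) \<le> s \<and> s \<le> 5/4 * a (\<beta> s)"
        using blk S0sub red(1) by blast
      have AEm: "AE z in F. z \<in> {m..M}" by (rule DF(6))
      have pw: "\<bar>p_mix \<theta> F x y - p_mix \<theta> Fe x y\<bar> \<le> \<theta> * \<phi> (x + \<theta>*y)" if xy: "0 < x" "0 < y" for x y
      proof -
        define u where "u = x + \<theta>*y"
        have u0: "0 \<le> u" unfolding u_def using xy th by simp
        define k where "k = (\<lambda>z::real. z\<^sup>2 * exp (-(z*u)))"
        have km: "k \<in> borel_measurable borel" unfolding k_def
          by (intro borel_measurable_continuous_onI continuous_intros)
        have pF: "p_mix \<theta> F x y = \<theta> * (\<integral>z. k z \<partial>F)"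
        proof -
          have "(\<lambda>z. z\<^sup>2 * \<theta> * exp (- z * (x + \<theta> * y))) = (\<lambda>z. \<theta> * k z)"
            unfolding k_def u_def by (auto simp: algebra_simps)
          then show ?thesis unfolding p_mix_def by simp
        qed
        have pFe: "p_mix \<theta> Fe x y = \<theta> * (\<Sum>z\<in>S. wG z * k z)"
        proof -
          have g: "(\<lambda>z. z\<^sup>2 * \<theta> * exp (- z * (x + \<theta> * y))) \<in> borel_measurable borel"
            by (intro borel_measurable_continuous_onI continuous_intros)
          have "p_mix \<theta> Fe x y = (\<Sum>z\<in>S. wG z * (z\<^sup>2 * \<theta> * exp (- z * (x + \<theta> * y))))"
            unfolding p_mix_def using DP(5)[OF g] .
          also have "\<dots> = \<theta> * (\<Sum>z\<in>S. wG z * k z)"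
            unfolding sum_distrib_left k_def u_def by (intro sum.cong refl) (simp add: algebra_simps)
          finally show ?thesis .
        qed
        have kint: "integrable F k"
        proof (rule F.integrable_const_bound[where B="M\<^sup>2"])
          show "AE z in F. norm (k z) \<le> M\<^sup>2" using AEm
          proof (rule AE_mp, intro AE_I2 impI)
            fix z assume z: "z \<in> {m..M}"
            have "norm (k z) = z\<^sup>2 * exp (-(z*u))" unfolding k_def by simp
            also have "\<dots> \<le> z\<^sup>2 * 1" using z m u0 by (intro mult_left_mono) auto
            also have "\<dots> \<le> M\<^sup>2" using z m by (simp add: power_mono)
            finally show "norm (k z) \<le> M\<^sup>2" .
          qed
          show "k \<in> borel_measurable F" using km unfolding bmF .
        qed
        have kr: "integrable F (\<lambda>z. k (r z))" and kr2: "(\<integral>z. k (r z) \<partial>F) = (\<Sum>s\<in>S0. wD s * k s)"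
          using intg[OF km] by auto
        define Cst where "Cst = \<delta> * (2*M + M\<^sup>2*u) * exp (-(m*u))"
        have eq1: "(\<integral>z. k z \<partial>F) - (\<Sum>s\<in>S0. wD s * k s) = (\<integral>z. k z - k (r z) \<partial>F)"
          using kint kr kr2 by simp
        have i1: "\<bar>\<integral>z. k z - k (r z) \<partial>F\<bar> \<le> (\<integral>z. \<bar>k z - k (r z)\<bar> \<partial>F)"
          by (rule integral_abs_bound_integral) (use kint kr in auto)
        have i2: "(\<integral>z. \<bar>k z - k (r z)\<bar> \<partial>F) \<le> (\<integral>z. Cst \<partial>F)"
        proof (rule integral_mono_AE)
          show "integrable F (\<lambda>z. \<bar>k z - k (r z)\<bar>)" using kint kr by auto
          show "integrable F (\<lambda>z. Cst)" by simp
          show "AE z in F. \<bar>k z - k (r z)\<bar> \<le> Cst" using AEm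
          proof (rule AE_mp, intro AE_I2 impI)
            fix z assume z: "z \<in> {m..M}"
            have rz: "r z \<in> S0" "r z \<le> z" "z - r z < \<delta>" using DF(4)[OF z] by auto
            have rzm: "m \<le> r z" using rz(1) S0sub by auto
            have "\<bar>k z - k (r z)\<bar> \<le> (z - r z) * (2*M + M\<^sup>2*u) * exp (-(m*u))"
              unfolding k_def using k_lip[of m "r z" z M u] m rzm rz(2) z u0 by auto
            also have "\<dots> \<le> \<delta> * (2*M + M\<^sup>2*u) * exp (-(m*u))"
              using rz(3) M0 u0 by (intro mult_right_mono) auto
            finally show "\<bar>k z - k (r z)\<bar> \<le> Cst" unfolding Cst_def .
          qed
        qed
        have i3: "(\<integral>z. Cst \<partial>F) = \<delta>*\<mu>*(2*M + M\<^sup>2*u)*exp (-(m*u))"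
          unfolding Cst_def \<mu>_def using spF by simp
        have b1: "\<bar>(\<integral>z. k z \<partial>F) - (\<Sum>s\<in>S0. wD s * k s)\<bar> \<le> \<delta>*\<mu>*(2*M + M\<^sup>2*u)*exp (-(m*u))"
          using i1 i2 i3 unfolding eq1 by linarith
        have b2: "\<bar>(\<Sum>s\<in>S0. wD s * k s) - (\<Sum>s\<in>S. wG s * k s)\<bar>
           \<le> (\<Sum>b<B. 2 * mD b * ((2 * (a b)\<^sup>2) * exp (-(a b*u)) * ((a b*u/4)^(Suc K) / fact (Suc K))))"
          unfolding k_def mD_def by (rule blocks_bound[OF finS0 finS wDnn wGnn blk2 apos mass mom u0])
        have tri: "\<bar>(\<integral>z. k z \<partial>F) - (\<Sum>s\<in>S. wG s * k s)\<bar> \<le> \<phi> u"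
        proof -
          have "\<bar>(\<integral>z. k z \<partial>F) - (\<Sum>s\<in>S. wG s * k s)\<bar> \<le> \<bar>(\<integral>z. k z \<partial>F) - (\<Sum>s\<in>S0. wD s * k s)\<bar> + \<bar>(\<Sum>s\<in>S0. wD s * k s) - (\<Sum>s\<in>S. wG s * k s)\<bar>"
            by (rule tri3)
          then show ?thesis using b1 b2 unfolding \<phi>_def by linarith
        qed
        have "\<bar>p_mix \<theta> F x y - p_mix \<theta> Fe x y\<bar> = \<theta> * \<bar>(\<integral>z. k z \<partial>F) - (\<Sum>s\<in>S. wG s * k s)\<bar>"
          unfolding pF pFe using th by (simp add: abs_mult right_diff_distrib[symmetric])
        also have "\<dots> \<le> \<theta> * \<phi> u" using tri th by (intro mult_left_mono) auto
        finally show ?thesis unfolding u_def .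
      qed
      have \<phi>m: "(\<lambda>u. ennreal (\<phi> u)) \<in> borel_measurable borel"
        unfolding \<phi>_def by measurable
      have L1: "L1_dist (p_mix \<theta> F) (p_mix \<theta> Fe) \<le> (\<integral>\<^sup>+xy. indicator ({0<..}\<times>{0<..}) xy * (ennreal \<theta> * ennreal (\<phi> (fst xy + \<theta> * snd xy))) \<partial>(lborel::(real\<times>real) measure))"
        unfolding L1_dist_def
      proof (rule nn_integral_mono)
        fix xy :: "real \<times> real"
        show "indicator ({0<..}\<times>{0<..}) xy * ennreal \<bar>p_mix \<theta> F (fst xy) (snd xy) - p_mix \<theta> Fe (fst xy) (snd xy)\<bar>
            \<le> indicator ({0<..}\<times>{0<..}) xy * (ennreal \<theta> * ennreal (\<phi> (fst xy + \<theta> * snd xy)))"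
        proof (cases "xy \<in> {0<..}\<times>{0<..}")
          case True
          then have "0 < fst xy" "0 < snd xy" by (auto simp: mem_Times_iff)
          then have "ennreal \<bar>p_mix \<theta> F (fst xy) (snd xy) - p_mix \<theta> Fe (fst xy) (snd xy)\<bar> \<le> ennreal (\<theta> * \<phi> (fst xy + \<theta> * snd xy))"
            by (intro ennreal_leI pw)
          also have "\<dots> = ennreal \<theta> * ennreal (\<phi> (fst xy + \<theta> * snd xy))"
            using th by (simp add: ennreal_mult')
          finally show ?thesis using True by simp
        qed simp
      qed
      also have "\<dots> = (\<integral>\<^sup>+u. indicator {0<..} u * (ennreal u * ennreal (\<phi> u)) \<partial>lborel)"
        by (rule L1_reduce[OF \<phi>m th])
      also have "\<dots> \<le> (\<integral>\<^sup>+u. ennreal (u * \<phi> u) * indicator {0..} u \<partial>lborel)"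
        by (rule nn_integral_mono) (auto simp: indicator_def ennreal_mult')
      also have "\<dots> = ennreal ((\<delta>*\<mu>) * (2*M/m\<^sup>2 + 2*M\<^sup>2/m^3) + (\<Sum>b<B. (2 * mD b) * (real (2 * (K+2)) / 4^(Suc K))))"
        unfolding \<phi>_def
        by (rule phi_integral[where A="\<delta>*\<mu>" and cB="\<lambda>b. 2 * mD b" and m=m and M=M and a=a and B=B and K=K]) (use m M0 dpos mupos mDnn apos in auto)
      also have "\<dots> < ennreal (\<mu> * \<epsilon>)"
      proof (rule ennreal_lessI)
        show "0 < \<mu> * \<epsilon>" using mupos e0 by simp
        have MM: "M*m + M\<^sup>2 > 0" using m M0 by (intro add_pos_pos mult_pos_pos) auto
        have t1: "(\<delta>*\<mu>) * (2*M/m\<^sup>2 + 2*M\<^sup>2/m^3) = \<mu>*\<epsilon>/4"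
        proof -
          have h: "2*M/m\<^sup>2 + 2*M\<^sup>2/m^3 = 2*(M*m + M\<^sup>2)/m^3" using m
            by (simp add: field_simps power2_eq_square power3_eq_cube)
          have gen: "\<And>X Y e mu::real. X \<noteq> 0 \<Longrightarrow> Y \<noteq> 0 \<Longrightarrow> (e * Y / (8 * X)) * mu * (2 * X / Y) = mu * e / 4"
            by (simp add: field_simps)
          show ?thesis unfolding h \<delta>_def using m MM by (intro gen) auto
        qed
        have blkS0: "\<forall>s\<in>S0. \<beta> s < B" using blk S0sub by blast
        have t2: "(\<Sum>b<B. mD b) = \<mu>"
          using sum_blocks[OF finS0 blkS0, of wD "\<lambda>_. 1"] sumwD unfolding mD_def by simp
        define c where "c = real (2 * (K+2)) / 4^(Suc K)"
        have t3: "(\<Sum>b<B. (2 * mD b) * c) = 2 * c * \<mu>"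
        proof -
          have "(\<Sum>b<B. (2 * mD b) * c) = (\<Sum>b<B. mD b * (2 * c))" by (intro sum.cong refl) simp
          also have "\<dots> = (\<Sum>b<B. mD b) * (2 * c)" by (rule sum_distrib_right[symmetric])
          finally show ?thesis unfolding t2 by simp
        qed
        have t4: "2 * c \<le> \<epsilon>/4"
        proof -
          have "Suc K < 2^(Suc K)" by (rule less_exp)
          then have "Suc (Suc K) \<le> 2^(Suc K)" by simp
          then have "real (Suc (Suc K)) \<le> real (2^(Suc K))" by (simp only: of_nat_le_iff)
          then have k2: "real K + 2 \<le> 2^(Suc K)" by simp
          have p4: "(4::real)^(Suc K) = 2^(Suc K) * 2^(Suc K)"
            by (simp add: power_mult_distrib[symmetric])
          have P: "(2::real)^(Suc K) > 0" by simp
          have "2 * c = 4 * (real K + 2) / (2^(Suc K) * 2^(Suc K))" unfolding c_def p4 by simp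
          also have "\<dots> \<le> 4 * 2^(Suc K) / (2^(Suc K) * 2^(Suc K))"
            using k2 P by (intro divide_right_mono mult_left_mono) auto
          also have "\<dots> = 2 / 2^K" using P by simp
          also have "\<dots> \<le> 2 / (8/\<epsilon>)" using KF(1) e0 by (intro divide_left_mono) auto
          also have "\<dots> = \<epsilon>/4" by simp
          finally show ?thesis .
        qed
        have "2 * c * \<mu> \<le> \<epsilon>/4 * \<mu>" using t4 mupos by (intro mult_right_mono) auto
        note q1 = this
        have q2: "(\<Sum>b<B. (2 * mD b) * (real (2 * (K+2)) / 4^(Suc K))) = 2 * c * \<mu>"
          using t3 unfolding c_def .
        have q3: "\<mu> * \<epsilon> > 0" using mupos e0 by simp
        have q4: "\<epsilon>/4 * \<mu> = (\<mu> * \<epsilon>) / 4" by simp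
        show "(\<delta>*\<mu>) * (2*M/m\<^sup>2 + 2*M\<^sup>2/m^3) + (\<Sum>b<B. (2 * mD b) * (real (2 * (K+2)) / 4^(Suc K))) < \<mu> * \<epsilon>"
          unfolding t1 q2 using q1 q3 unfolding q4 by linarith
      qed
      finally show ?thesis unfolding \<mu>_def .
    qed
  qed
qed

end
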